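(* Let $\phi:(\mathcal C,S)\to(\mathcal D,T)$ be an admissible morphism from a finite quasi-schemoid $(\mathcal C,S)$ whose underlying category is a groupoid to a basic quasi-schemoid $(\mathcal D,T)$. Then for each $\sigma\in S$ there is a positive integer $n^\phi_\sigma$ such that for every $x\in ob(\mathcal C)$ and every $g\in\phi(\sigma)$ with $t(g)=\phi(x)$, $$\#\big(\phi^{-1}(g)\cap x\sigma\big)=n^\phi_\sigma,$$ where $x\sigma=\{f\in\sigma: t(f)=x\}$.
   Context: Write $s(f),t(f)$ for source and target. A quasi-schemoid is a pair $(\mathcal C,S)$ with $\mathcal C$ a small category and $S$ a partition of $mor(\mathcal C)$ into nonempty blocks such that for all $\sigma,\tau,\mu\in S$ and $f,g\in\mu$ the sets $\{(a,b)\in\sigma\times\tau: s(a)=t(b), a\circ b=f\}$ and the analogous set for $g$ have equal cardinality, denoted $p^\mu_{\sigma\tau}$. It is finite if $mor(\mathcal C)$ is finite; unital if every block meeting $\{1_x:x\in ob(\mathcal C)\}$ is contained in it; basic if it is unital and $\mathcal C$ is a groupoid. A morphism of quasi-schemoids $\phi$ is a functor such that each $\phi(\sigma)$ lies in a (unique) block of the target; by abuse, $\phi(\sigma)$ denotes that block. $\phi$ is admissible if for every $x\in ob(\mathcal C)$, $\sigma\in S$ and $g\in\phi(\sigma)$ with $t(g)=\phi(x)$ there exists $f\in\sigma$ with $t(f)=x$ and $\phi(f)=g$. *)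

theory Defs
  imports Main "HOL-Library.Equipollence"
begin

text \<open>A small category: objects, morphisms, source, target, composition
  (Cmp a b = a \<circ> b, defined when Src a = Tgt b) and identities.\<close>
record ('o,'m) cat =
  Ob  :: "'o set"
  Mor :: "'m set"
  Src :: "'m \<Rightarrow> 'o"
  Tgt :: "'m \<Rightarrow> 'o"
  Cmp :: "'m \<Rightarrow> 'm \<Rightarrow> 'm"
  Idm :: "'o \<Rightarrow> 'm"

definition category :: "('o,'m) cat \<Rightarrow> bool" where
  "category C \<longleftrightarrow>
     (\<forall>f\<in>Mor C. Src C f \<in> Ob C \<and> Tgt C f \<in> Ob C) \<and>
     (\<forall>x\<in>Ob C. Idm C x \<in> Mor C \<and> Src C (Idm C x) = x \<and> Tgt C (Idm C x) = x) \<and>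
     (\<forall>a\<in>Mor C. \<forall>b\<in>Mor C. Src C a = Tgt C b \<longrightarrow>
        Cmp C a b \<in> Mor C \<and> Src C (Cmp C a b) = Src C b \<and> Tgt C (Cmp C a b) = Tgt C a) \<and>
     (\<forall>a\<in>Mor C. \<forall>b\<in>Mor C. \<forall>c\<in>Mor C. Src C a = Tgt C b \<longrightarrow> Src C b = Tgt C c \<longrightarrow>
        Cmp C (Cmp C a b) c = Cmp C a (Cmp C b c)) \<and>
     (\<forall>f\<in>Mor C. Cmp C (Idm C (Tgt C f)) f = f \<and> Cmp C f (Idm C (Src C f)) = f)"

definition groupoid :: "('o,'m) cat \<Rightarrow> bool" where
  "groupoid C \<longleftrightarrow> category C \<and>
     (\<forall>f\<in>Mor C. \<exists>g\<in>Mor C. Src C g = Tgt C f \<and> Tgt C g = Src C f \<and>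
        Cmp C g f = Idm C (Src C f) \<and> Cmp C f g = Idm C (Tgt C f))"

definition factor_pairs :: "('o,'m) cat \<Rightarrow> 'm set \<Rightarrow> 'm set \<Rightarrow> 'm \<Rightarrow> ('m \<times> 'm) set" where
  "factor_pairs C \<sigma> \<tau> f = {(a,b). a \<in> \<sigma> \<and> b \<in> \<tau> \<and> Src C a = Tgt C b \<and> Cmp C a b = f}"

definition is_partition :: "'m set set \<Rightarrow> 'm set \<Rightarrow> bool" where
  "is_partition S M \<longleftrightarrow> \<Union>S = M \<and> {} \<notin> S \<and>
     (\<forall>\<sigma>\<in>S. \<forall>\<tau>\<in>S. \<sigma> \<noteq> \<tau> \<longrightarrow> \<sigma> \<inter> \<tau> = {})"

text \<open>Equal cardinality is expressed by equipollence (the sets may be infinite).\<close>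
definition quasi_schemoid :: "('o,'m) cat \<Rightarrow> 'm set set \<Rightarrow> bool" where
  "quasi_schemoid C S \<longleftrightarrow> category C \<and> is_partition S (Mor C) \<and>
     (\<forall>\<sigma>\<in>S. \<forall>\<tau>\<in>S. \<forall>\<mu>\<in>S. \<forall>f\<in>\<mu>. \<forall>g\<in>\<mu>.
        factor_pairs C \<sigma> \<tau> f \<approx> factor_pairs C \<sigma> \<tau> g)"

definition identities :: "('o,'m) cat \<Rightarrow> 'm set" where
  "identities C = Idm C ` Ob C"

definition unital_qs :: "('o,'m) cat \<Rightarrow> 'm set set \<Rightarrow> bool" where
  "unital_qs C S \<longleftrightarrow> quasi_schemoid C S \<and>
     (\<forall>\<sigma>\<in>S. \<sigma> \<inter> identities C \<noteq> {} \<longrightarrow> \<sigma> \<subseteq> identities C)"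

definition basic_qs :: "('o,'m) cat \<Rightarrow> 'm set set \<Rightarrow> bool" where
  "basic_qs C S \<longleftrightarrow> unital_qs C S \<and> groupoid C"

definition is_functor :: "('o,'m) cat \<Rightarrow> ('p,'n) cat \<Rightarrow> ('o \<Rightarrow> 'p) \<Rightarrow> ('m \<Rightarrow> 'n) \<Rightarrow> bool" where
  "is_functor C D Fo Fm \<longleftrightarrow>
     (\<forall>x\<in>Ob C. Fo x \<in> Ob D) \<and>
     (\<forall>f\<in>Mor C. Fm f \<in> Mor D \<and> Src D (Fm f) = Fo (Src C f) \<and> Tgt D (Fm f) = Fo (Tgt C f)) \<and>
     (\<forall>a\<in>Mor C. \<forall>b\<in>Mor C. Src C a = Tgt C b \<longrightarrow> Fm (Cmp C a b) = Cmp D (Fm a) (Fm b)) \<and>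
     (\<forall>x\<in>Ob C. Fm (Idm C x) = Idm D (Fo x))"

definition qs_morphism ::
  "('o,'m) cat \<Rightarrow> 'm set set \<Rightarrow> ('p,'n) cat \<Rightarrow> 'n set set \<Rightarrow> ('o \<Rightarrow> 'p) \<Rightarrow> ('m \<Rightarrow> 'n) \<Rightarrow> bool" where
  "qs_morphism C S D T Fo Fm \<longleftrightarrow> quasi_schemoid C S \<and> quasi_schemoid D T \<and>
     is_functor C D Fo Fm \<and> (\<forall>\<sigma>\<in>S. \<exists>\<tau>\<in>T. Fm ` \<sigma> \<subseteq> \<tau>)"

definition img_block :: "'n set set \<Rightarrow> ('m \<Rightarrow> 'n) \<Rightarrow> 'm set \<Rightarrow> 'n set" where
  "img_block T Fm \<sigma> = (THE \<tau>. \<tau> \<in> T \<and> Fm ` \<sigma> \<subseteq> \<tau>)"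

definition admissible ::
  "('o,'m) cat \<Rightarrow> 'm set set \<Rightarrow> ('p,'n) cat \<Rightarrow> 'n set set \<Rightarrow> ('o \<Rightarrow> 'p) \<Rightarrow> ('m \<Rightarrow> 'n) \<Rightarrow> bool" where
  "admissible C S D T Fo Fm \<longleftrightarrow> qs_morphism C S D T Fo Fm \<and>
     (\<forall>x\<in>Ob C. \<forall>\<sigma>\<in>S. \<forall>g\<in>img_block T Fm \<sigma>. Tgt D g = Fo x \<longrightarrow>
        (\<exists>f\<in>\<sigma>. Tgt C f = x \<and> Fm f = g))"

end

theory Submission
  imports Defs
begin

lemma cat_p1: "category C \<Longrightarrow> \<forall>f\<in>Mor C. Src C f \<in> Ob C \<and> Tgt C f \<in> Ob C"
  unfolding category_def by (elim conjE)
lemma cat_p2: "category C \<Longrightarrow> \<forall>x\<in>Ob C. Idm C x \<in> Mor C \<and> Src C (Idm C x) = x \<and> Tgt C (Idm C x) = x"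
  unfolding category_def by (elim conjE)
lemma cat_p3: "category C \<Longrightarrow> \<forall>a\<in>Mor C. \<forall>b\<in>Mor C. Src C a = Tgt C b \<longrightarrow>
        Cmp C a b \<in> Mor C \<and> Src C (Cmp C a b) = Src C b \<and> Tgt C (Cmp C a b) = Tgt C a"
  unfolding category_def by (elim conjE)
lemma cat_p4: "category C \<Longrightarrow> \<forall>a\<in>Mor C. \<forall>b\<in>Mor C. \<forall>c\<in>Mor C. Src C a = Tgt C b \<longrightarrow> Src C b = Tgt C c \<longrightarrow>
        Cmp C (Cmp C a b) c = Cmp C a (Cmp C b c)"
  unfolding category_def by (elim conjE)
lemma cat_p5: "category C \<Longrightarrow> \<forall>f\<in>Mor C. Cmp C (Idm C (Tgt C f)) f = f \<and> Cmp C f (Idm C (Src C f)) = f"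
  unfolding category_def by (elim conjE)

lemma cat_cmp:
  "category C \<Longrightarrow> a \<in> Mor C \<Longrightarrow> b \<in> Mor C \<Longrightarrow> Src C a = Tgt C b \<Longrightarrow>
     Cmp C a b \<in> Mor C \<and> Src C (Cmp C a b) = Src C b \<and> Tgt C (Cmp C a b) = Tgt C a"
  using cat_p3 by blast

lemma cat_assoc:
  "category C \<Longrightarrow> a \<in> Mor C \<Longrightarrow> b \<in> Mor C \<Longrightarrow> c \<in> Mor C \<Longrightarrow> Src C a = Tgt C b \<Longrightarrow>
     Src C b = Tgt C c \<Longrightarrow> Cmp C (Cmp C a b) c = Cmp C a (Cmp C b c)"
  using cat_p4 by blast

lemma cat_idl: "category C \<Longrightarrow> f \<in> Mor C \<Longrightarrow> Cmp C (Idm C (Tgt C f)) f = f"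
  using cat_p5 by blast

lemma cat_idr: "category C \<Longrightarrow> f \<in> Mor C \<Longrightarrow> Cmp C f (Idm C (Src C f)) = f"
  using cat_p5 by blast

lemma cat_st: "category C \<Longrightarrow> f \<in> Mor C \<Longrightarrow> Src C f \<in> Ob C \<and> Tgt C f \<in> Ob C"
  using cat_p1 by blast

lemma cat_id: "category C \<Longrightarrow> x \<in> Ob C \<Longrightarrow> Idm C x \<in> Mor C \<and> Src C (Idm C x) = x \<and> Tgt C (Idm C x) = x"
  using cat_p2 by blast

lemma grp_inv:
  assumes "groupoid C" "f \<in> Mor C"
  shows "\<exists>g\<in>Mor C. Src C g = Tgt C f \<and> Tgt C g = Src C f \<and>
        Cmp C g f = Idm C (Src C f) \<and> Cmp C f g = Idm C (Tgt C f)"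
proof -
  have "\<forall>f\<in>Mor C. \<exists>g\<in>Mor C. Src C g = Tgt C f \<and> Tgt C g = Src C f \<and>
        Cmp C g f = Idm C (Src C f) \<and> Cmp C f g = Idm C (Tgt C f)"
    using assms(1) unfolding groupoid_def by (rule conjunct2)
  then show ?thesis using assms(2) by (rule bspec)
qed

lemma grp_cat: "groupoid C \<Longrightarrow> category C"
  unfolding groupoid_def by (rule conjunct1)

lemma grp_cancel_left:
  assumes G: "groupoid C" and a: "a \<in> Mor C" and b: "b \<in> Mor C" and b': "b' \<in> Mor C"
    and s1: "Src C a = Tgt C b" and s2: "Src C a = Tgt C b'"
    and eq: "Cmp C a b = Cmp C a b'"
  shows "b = b'"
proof -
  have cat: "category C" using G by (rule grp_cat)
  obtain i where i: "i \<in> Mor C" "Src C i = Tgt C a" "Tgt C i = Src C a"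
    "Cmp C i a = Idm C (Src C a)" using grp_inv[OF G a] by blast
  have "Cmp C i (Cmp C a b) = Cmp C (Cmp C i a) b"
    using cat_assoc[OF cat i(1) a b i(2) s1] by simp
  also have "\<dots> = b" using i(4) s1 cat_idl[OF cat b] by simp
  finally have 1: "Cmp C i (Cmp C a b) = b" .
  have "Cmp C i (Cmp C a b') = Cmp C (Cmp C i a) b'"
    using cat_assoc[OF cat i(1) a b' i(2) s2] by simp
  also have "\<dots> = b'" using i(4) s2 cat_idl[OF cat b'] by simp
  finally have 2: "Cmp C i (Cmp C a b') = b'" .
  have "b = Cmp C i (Cmp C a b)" using 1 by (rule sym)
  also have "\<dots> = Cmp C i (Cmp C a b')" using eq by (rule arg_cong)
  also have "\<dots> = b'" by (rule 2)
  finally show ?thesis .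
qed

theorem lemma6p5:
  fixes C :: "('o,'m) cat" and S :: "'m set set"
    and D :: "('p,'n) cat" and T :: "'n set set"
    and Fo :: "'o \<Rightarrow> 'p" and Fm :: "'m \<Rightarrow> 'n"
  assumes "quasi_schemoid C S" and "finite (Mor C)" and "groupoid C"
    and "basic_qs D T"
    and "admissible C S D T Fo Fm"
  shows "\<forall>\<sigma>\<in>S. \<exists>n::nat. n > 0 \<and>
           (\<forall>x\<in>Ob C. \<forall>g\<in>img_block T Fm \<sigma>. Tgt D g = Fo x \<longrightarrow>
              card {f\<in>\<sigma>. Tgt C f = x \<and> Fm f = g} = n)"
proof
  fix \<sigma> assume \<sigma>S: "\<sigma> \<in> S"
  note qsC = assms(1) and fin = assms(2) and GC = assms(3)
  have catC: "category C" using GC by (simp add: groupoid_def)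
  have GD: "groupoid D" and unD: "unital_qs D T" using assms(4) by (auto simp: basic_qs_def)
  have catD: "category D" using GD by (simp add: groupoid_def)
  have mor: "qs_morphism C S D T Fo Fm" using assms(5) by (simp add: admissible_def)
  have F: "is_functor C D Fo Fm" using mor by (simp add: qs_morphism_def)
  have blk: "\<forall>\<rho>\<in>S. \<exists>\<tau>\<in>T. Fm ` \<rho> \<subseteq> \<tau>" using mor by (simp add: qs_morphism_def)
  have partC: "is_partition S (Mor C)" using qsC by (simp add: quasi_schemoid_def)
  have unT: "\<forall>\<tau>\<in>T. \<tau> \<inter> identities D \<noteq> {} \<longrightarrow> \<tau> \<subseteq> identities D"
    using unD by (simp add: unital_qs_def)
  have \<sigma>M: "\<sigma> \<subseteq> Mor C" using partC \<sigma>S by (auto simp: is_partition_def)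
  define R where "R = {b \<in> Mor C. Fm b \<in> identities D}"
  define SR where "SR = {\<rho>\<in>S. \<rho> \<subseteq> R}"
  have RU: "R = \<Union>SR"
  proof
    show "\<Union>SR \<subseteq> R" unfolding SR_def by auto
    show "R \<subseteq> \<Union>SR"
    proof
      fix b assume bR: "b \<in> R"
      then have "b \<in> Mor C" by (simp add: R_def)
      then obtain \<rho> where \<rho>: "\<rho> \<in> S" "b \<in> \<rho>" using partC unfolding is_partition_def by blast
      obtain \<tau> where \<tau>: "\<tau> \<in> T" "Fm ` \<rho> \<subseteq> \<tau>" using blk \<rho> by blast
      have "Fm b \<in> \<tau> \<inter> identities D" using bR \<tau> \<rho> by (auto simp: R_def)
      then have "\<tau> \<subseteq> identities D" using unT \<tau> by blast
      then have "\<rho> \<subseteq> R" proof -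
        have "\<rho> \<subseteq> Mor C" using \<rho>(1) partC unfolding is_partition_def by blast
        then show ?thesis using \<open>\<tau> \<subseteq> identities D\<close> \<tau>(2) unfolding R_def by blast
      qed
      then show "b \<in> \<Union>SR" using \<rho> by (auto simp: SR_def)
    qed
  qed
  define N where "N x g = card {f\<in>\<sigma>. Tgt C f = x \<and> Fm f = g}" for x g
  have key: "N (Tgt C f0) (Fm f0) = card (factor_pairs C \<sigma> R f0)" if f0: "f0 \<in> \<sigma>" for f0
  proof -
    have f0M: "f0 \<in> Mor C" using f0 \<sigma>M by blast
    let ?P = "factor_pairs C \<sigma> R f0"
    have inj: "inj_on fst ?P"
    proof (rule inj_onI)
      fix p q assume p: "p \<in> ?P" and q: "q \<in> ?P" and e: "fst p = fst q"
      obtain a b where [simp]: "p = (a,b)" by (cases p)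
      obtain a' b' where [simp]: "q = (a',b')" by (cases q)
      have "(a,b) \<in> ?P" using p by simp
      then have "a \<in> \<sigma> \<and> b \<in> R \<and> Src C a = Tgt C b \<and> Cmp C a b = f0"
        by (simp add: factor_pairs_def)
      then have P1: "a \<in> \<sigma>" "b \<in> R" "Src C a = Tgt C b" "Cmp C a b = f0" by blast+
      have "(a',b') \<in> ?P" using q by simp
      then have "a' \<in> \<sigma> \<and> b' \<in> R \<and> Src C a' = Tgt C b' \<and> Cmp C a' b' = f0"
        by (simp add: factor_pairs_def)
      then have P2: "a' \<in> \<sigma>" "b' \<in> R" "Src C a' = Tgt C b'" "Cmp C a' b' = f0" by blast+
      have aa: "a = a'" using e by simp
      have m1: "a \<in> Mor C" using P1(1) \<sigma>M by blast
      have m2: "b \<in> Mor C" using P1(2) unfolding R_def by simp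
      have m3: "b' \<in> Mor C" using P2(2) unfolding R_def by simp
      have m4: "Src C a = Tgt C b'" using P2(3) aa by simp
      have m5: "Cmp C a b = Cmp C a b'" using P1(4) P2(4) aa by simp
      have "b = b'" by (rule grp_cancel_left[OF GC m1 m2 m3 P1(3) m4 m5])
      then show "p = q" using e by simp
    qed
    have img: "fst ` ?P = {f\<in>\<sigma>. Tgt C f = Tgt C f0 \<and> Fm f = Fm f0}"
    proof
      show "fst ` ?P \<subseteq> {f\<in>\<sigma>. Tgt C f = Tgt C f0 \<and> Fm f = Fm f0}"
      proof
        fix a assume "a \<in> fst ` ?P"
        then obtain p where "p \<in> ?P" "a = fst p" by blast
        then obtain b where ab: "(a,b) \<in> ?P" by (cases p) simp
        then have ab': "a \<in> \<sigma> \<and> b \<in> R \<and> Src C a = Tgt C b \<and> Cmp C a b = f0"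
          by (simp add: factor_pairs_def)
        then have a: "a \<in> \<sigma>" and bM: "b \<in> Mor C" and bI: "Fm b \<in> identities D"
          and sa: "Src C a = Tgt C b" and c: "Cmp C a b = f0"
          by (simp_all add: R_def)
        have aM: "a \<in> Mor C" using a \<sigma>M by blast
        have t: "Tgt C f0 = Tgt C a" using cat_cmp[OF catC aM bM sa] c by simp
        obtain y where y: "y \<in> Ob D" "Fm b = Idm D y" using bI by (auto simp: identities_def)
        have "Tgt D (Fm b) = y" using cat_id[OF catD y(1)] y(2) by simp
        moreover have "Src D (Fm a) = Fo (Src C a)" "Tgt D (Fm b) = Fo (Tgt C b)"
          using F aM bM unfolding is_functor_def by auto
        ultimately have sy: "Src D (Fm a) = y" using sa by simp
        have FaM: "Fm a \<in> Mor D" using F aM unfolding is_functor_def by auto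
        have "Fm f0 = Cmp D (Fm a) (Fm b)" using F aM bM sa c unfolding is_functor_def by metis
        also have "\<dots> = Fm a" using y sy cat_idr[OF catD FaM] by simp
        finally show "a \<in> {f\<in>\<sigma>. Tgt C f = Tgt C f0 \<and> Fm f = Fm f0}" using a t by simp
      qed
      show "{f\<in>\<sigma>. Tgt C f = Tgt C f0 \<and> Fm f = Fm f0} \<subseteq> fst ` ?P"
      proof
        fix a assume "a \<in> {f\<in>\<sigma>. Tgt C f = Tgt C f0 \<and> Fm f = Fm f0}"
        then have a: "a \<in> \<sigma>" and t: "Tgt C a = Tgt C f0" and fa: "Fm a = Fm f0" by auto
        have aM: "a \<in> Mor C" using a \<sigma>M by blast
        obtain i where i: "i \<in> Mor C" "Src C i = Tgt C a" "Tgt C i = Src C a"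
          "Cmp C a i = Idm C (Tgt C a)" using GC aM unfolding groupoid_def by blast
        define b where "b = Cmp C i f0"
        have bM: "b \<in> Mor C" and tb: "Tgt C b = Src C a"
          using cat_cmp[OF catC i(1) f0M] i t unfolding b_def by simp_all
        have "Cmp C a b = Cmp C (Cmp C a i) f0"
          using cat_assoc[OF catC aM i(1) f0M] i t unfolding b_def by simp
        also have "\<dots> = f0" using i t cat_idl[OF catC f0M] by simp
        finally have c: "Cmp C a b = f0" .
        have FaM: "Fm a \<in> Mor D" and FbM: "Fm b \<in> Mor D"
          and sFa: "Src D (Fm a) = Fo (Src C a)" and tFb: "Tgt D (Fm b) = Fo (Tgt C b)"
          using F aM bM unfolding is_functor_def by auto
        have oa: "Src D (Fm a) \<in> Ob D" using cat_st[OF catD FaM] by blast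
        have IM: "Idm D (Src D (Fm a)) \<in> Mor D" "Tgt D (Idm D (Src D (Fm a))) = Src D (Fm a)"
          using cat_id[OF catD oa] by blast+
        have "Cmp D (Fm a) (Fm b) = Fm f0" using F aM bM tb c unfolding is_functor_def by metis
        also have "\<dots> = Cmp D (Fm a) (Idm D (Src D (Fm a)))"
          using fa cat_idr[OF catD FaM] by simp
        finally have "Fm b = Idm D (Src D (Fm a))"
          using grp_cancel_left[OF GD FaM FbM IM(1)] IM(2) sFa tFb tb by simp
        then have "Fm b \<in> identities D" using oa by (simp add: identities_def)
        then have "(a,b) \<in> ?P" using a bM tb c by (simp add: factor_pairs_def R_def)
        then show "a \<in> fst ` ?P" by force
      qed
    qed
    show ?thesis unfolding N_def using card_image[OF inj] img by simp
  qed
  have SRfin: "finite SR"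
  proof -
    have "SR \<subseteq> Pow (Mor C)" using partC unfolding SR_def is_partition_def by auto
    then show ?thesis using fin finite_subset by blast
  qed
  have FPfin: "finite (factor_pairs C \<sigma> \<rho> f)" if "\<rho> \<in> S" for \<rho> f
  proof -
    have "factor_pairs C \<sigma> \<rho> f \<subseteq> Mor C \<times> Mor C"
      using that \<sigma>M partC unfolding factor_pairs_def is_partition_def by auto
    then show ?thesis using fin finite_subset by blast
  qed
  have cardsum: "card (factor_pairs C \<sigma> R f) = (\<Sum>\<rho>\<in>SR. card (factor_pairs C \<sigma> \<rho> f))" for f
  proof -
    have "factor_pairs C \<sigma> R f = (\<Union>\<rho>\<in>SR. factor_pairs C \<sigma> \<rho> f)"
      unfolding RU factor_pairs_def by auto
    moreover have "card (\<Union>\<rho>\<in>SR. factor_pairs C \<sigma> \<rho> f) = (\<Sum>\<rho>\<in>SR. card (factor_pairs C \<sigma> \<rho> f))"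
    proof (rule card_UN_disjoint[OF SRfin])
      show "\<forall>i\<in>SR. finite (factor_pairs C \<sigma> i f)" using FPfin by (auto simp: SR_def)
      show "\<forall>i\<in>SR. \<forall>j\<in>SR. i \<noteq> j \<longrightarrow> factor_pairs C \<sigma> i f \<inter> factor_pairs C \<sigma> j f = {}"
        using partC unfolding SR_def is_partition_def factor_pairs_def by blast
    qed
    ultimately show ?thesis by simp
  qed
  have const: "card (factor_pairs C \<sigma> R f0) = card (factor_pairs C \<sigma> R f1)"
    if "f0 \<in> \<sigma>" "f1 \<in> \<sigma>" for f0 f1
  proof -
    have "card (factor_pairs C \<sigma> \<rho> f0) = card (factor_pairs C \<sigma> \<rho> f1)" if "\<rho> \<in> SR" for \<rho>
    proof -
      have \<rho>S: "\<rho> \<in> S" using that by (simp add: SR_def)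
      have "factor_pairs C \<sigma> \<rho> f0 \<approx> factor_pairs C \<sigma> \<rho> f1"
        using qsC \<sigma>S \<rho>S \<open>f0 \<in> \<sigma>\<close> \<open>f1 \<in> \<sigma>\<close> unfolding quasi_schemoid_def by blast
      then show ?thesis using eqpoll_iff_card FPfin \<rho>S by blast
    qed
    then show ?thesis unfolding cardsum by (rule sum.cong[OF refl])
  qed
  have "\<sigma> \<noteq> {}" using partC \<sigma>S unfolding is_partition_def by metis
  then obtain f0 where f0: "f0 \<in> \<sigma>" by blast
  define n where "n = N (Tgt C f0) (Fm f0)"
  have "n > 0"
  proof -
    have "finite {f\<in>\<sigma>. Tgt C f = Tgt C f0 \<and> Fm f = Fm f0}"
      by (rule finite_subset[OF _ fin]) (use \<sigma>M in blast)
    moreover have "f0 \<in> {f\<in>\<sigma>. Tgt C f = Tgt C f0 \<and> Fm f = Fm f0}" using f0 by simp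
    ultimately show ?thesis unfolding n_def N_def using card_gt_0_iff by blast
  qed
  moreover have "\<forall>x\<in>Ob C. \<forall>g\<in>img_block T Fm \<sigma>. Tgt D g = Fo x \<longrightarrow>
              card {f\<in>\<sigma>. Tgt C f = x \<and> Fm f = g} = n"
  proof (intro ballI impI)
    fix x g assume x: "x \<in> Ob C" and g: "g \<in> img_block T Fm \<sigma>" and tg: "Tgt D g = Fo x"
    obtain f where f: "f \<in> \<sigma>" "Tgt C f = x" "Fm f = g"
      proof -
      have "\<forall>x\<in>Ob C. \<forall>\<sigma>\<in>S. \<forall>g\<in>img_block T Fm \<sigma>. Tgt D g = Fo x \<longrightarrow>
        (\<exists>f\<in>\<sigma>. Tgt C f = x \<and> Fm f = g)" using assms(5) unfolding admissible_def by (rule conjunct2)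
      then show ?thesis using x \<sigma>S g tg that by blast
    qed
    have "card {f\<in>\<sigma>. Tgt C f = x \<and> Fm f = g} = N (Tgt C f) (Fm f)" using f by (simp add: N_def)
    also have "\<dots> = n" unfolding n_def using key[OF f(1)] key[OF f0] const[OF f(1) f0] by simp
    finally show "card {f\<in>\<sigma>. Tgt C f = x \<and> Fm f = g} = n" .
  qed
  ultimately show "\<exists>n::nat. n > 0 \<and>
           (\<forall>x\<in>Ob C. \<forall>g\<in>img_block T Fm \<sigma>. Tgt D g = Fo x \<longrightarrow>
              card {f\<in>\<sigma>. Tgt C f = x \<and> Fm f = g} = n)" by blast
qed

end
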